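(* Let $(V_o,w_o,\mu_o)$ be a simple weighted graph with adapted weight $\sigma_o$ and adapted path metric $d_{\sigma_o}$, and fix $\bar x\in V_o$. Assume $C_o:=\inf_{x\in V_o}\mu_o(x)>0$ and that every ball $B_{d_{\sigma_o}}(\bar x,r)$ has finite $\mu_o$-measure. Set \[f(r)=\log\mu_o\big(B_{d_{\sigma_o}}(\bar x,r)\big)-\log C_o,\qquad R_n=2^{n+4},\qquad \sigma_n=\frac{1}{f(R_n)+2+\log\log R_n}\qquad(n\in\mathbb N).\] Let $\mathfrak n:E_o\to\mathbb N_+$ be symmetric with $\mathfrak n\ge2$, such that for every $n\in\mathbb N$ and every $e=(x,y)\in E_o$ with $d_{\sigma_o}(x,\bar x)\vee d_{\sigma_o}(y,\bar x)\ge2^{n+2}-1$, \[\mathfrak n(e)\ge f(R_n)+2+\log\log R_n.\] Let $(V,w,\mu)$ be the modified graph with weight $\mathfrak n$, with adapted weight $\sigma$ and path metric $d_\sigma$. Then for every $n\in\mathbb N$, every $e=(x,y)\in E_o^+$ and every $0\le k\le\mathfrak n(e)-1$: if $d_\sigma(x^e_k,\bar x)\vee d_\sigma(x^e_{k+1},\bar x)\ge2^{n+2}$, then $\sigma(x^e_k,x^e_{k+1})\le\sigma_n$.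
   Context: **Weighted graphs.** A simple weighted graph $(V,w,\mu)$ consists of a countably infinite set $V$, a symmetric function $w:V\times V\to[0,\infty)$ and a function $\mu:V\to(0,\infty)$. The graph with edges $\{x\sim y:w(x,y)>0\}$ is assumed to be locally finite, connected, and without loops or multiple edges. **Adapted weights and metrics.** An adapted weight is a symmetric $\sigma:E\to(0,1]$ with $\frac1{\mu(x)}\sum_y w(x,y)\sigma(x,y)^2\le1$ for all $x$. The adapted path metric $d_\sigma(x,y)$ is the infimum of $\sum_i\sigma(x_i,x_{i+1})$ over paths $x=x_0\sim\cdots\sim x_n=y$. Closed balls are $B_d(x,r)=\{y:d(x,y)\le r\}$, and $a\vee b=\max(a,b)$. **Modified graph.** Fix an orientation $E_o^+$ of $E_o$. For $e=(x,y)\in E_o^+$, add distinct new vertices $x^e_1,\dots,x^e_{\mathfrak n(e)-1}$, set $x_0^e=x$, $x^e_{\mathfrak n(e)}=y$, and replace the edge $x\sim y$ by the path $x^e_0\sim\cdots\sim x^e_{\mathfrak n(e)}$. Weights and measure: - $w(x^e_i,x^e_{i+1})=\mathfrak n(e)w_o(e)$, symmetric, and $w=0$ otherwise; - $\mu=\mu_o$ on $V_o$, and $\mu(x^e_i)=2w_o(e)\sigma_o(e)^2/\mathfrak n(e)$; - $\sigma(x^e_i,x^e_{i+1})=\sigma_o(e)/\mathfrak n(e)$. *)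

theory Defs
  imports "HOL-Analysis.Analysis"
begin

text \<open>A weighted graph on the vertex type 'v (vertex set = UNIV): edge weight w,
  measure mu. Edges are the pairs with w x y > 0.\<close>

definition is_walk :: "('v \<Rightarrow> 'v \<Rightarrow> real) \<Rightarrow> 'v list \<Rightarrow> bool" where
  "is_walk w p \<longleftrightarrow> (\<forall>i. Suc i < length p \<longrightarrow> w (p ! i) (p ! Suc i) > 0)"

definition walk_len :: "('v \<Rightarrow> 'v \<Rightarrow> real) \<Rightarrow> 'v list \<Rightarrow> real" where
  "walk_len s p = (\<Sum>i<length p - 1. s (p ! i) (p ! Suc i))"

definition simple_weighted_graph :: "('v \<Rightarrow> 'v \<Rightarrow> real) \<Rightarrow> ('v \<Rightarrow> real) \<Rightarrow> bool" where
  "simple_weighted_graph w mu \<longleftrightarrow>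
     countable (UNIV :: 'v set) \<and> infinite (UNIV :: 'v set) \<and>
     (\<forall>x y. w x y = w y x) \<and> (\<forall>x y. w x y \<ge> 0) \<and> (\<forall>x. w x x = 0) \<and>
     (\<forall>x. mu x > 0) \<and>
     (\<forall>x. finite {y. w x y > 0}) \<and>
     (\<forall>x y. \<exists>p. p \<noteq> [] \<and> hd p = x \<and> last p = y \<and> is_walk w p)"

definition adapted_weight :: "('v \<Rightarrow> 'v \<Rightarrow> real) \<Rightarrow> ('v \<Rightarrow> real) \<Rightarrow> ('v \<Rightarrow> 'v \<Rightarrow> real) \<Rightarrow> bool" where
  "adapted_weight w mu s \<longleftrightarrow>
     (\<forall>x y. w x y > 0 \<longrightarrow> s x y = s y x \<and> 0 < s x y \<and> s x y \<le> 1) \<and>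
     (\<forall>x. (1 / mu x) * (\<Sum>y\<in>{y. w x y > 0}. w x y * (s x y)\<^sup>2) \<le> 1)"

definition path_dist :: "('v \<Rightarrow> 'v \<Rightarrow> real) \<Rightarrow> ('v \<Rightarrow> 'v \<Rightarrow> real) \<Rightarrow> 'v \<Rightarrow> 'v \<Rightarrow> real" where
  "path_dist w s x y =
     Inf {walk_len s p | p. p \<noteq> [] \<and> hd p = x \<and> last p = y \<and> is_walk w p}"

definition cball_d :: "('v \<Rightarrow> 'v \<Rightarrow> real) \<Rightarrow> 'v \<Rightarrow> real \<Rightarrow> 'v set" where
  "cball_d d x r = {y. d x y \<le> r}"

definition orientation :: "('v \<Rightarrow> 'v \<Rightarrow> real) \<Rightarrow> ('v \<times> 'v) set \<Rightarrow> bool" where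
  "orientation w Ep \<longleftrightarrow> (\<forall>(x,y)\<in>Ep. w x y > 0) \<and>
     (\<forall>x y. w x y > 0 \<longrightarrow> ((x,y) \<in> Ep \<longleftrightarrow> (y,x) \<notin> Ep))"

datatype 'v mvert = Orig 'v | Sub "'v \<times> 'v" nat

definition xe :: "('v \<Rightarrow> 'v \<Rightarrow> nat) \<Rightarrow> 'v \<times> 'v \<Rightarrow> nat \<Rightarrow> 'v mvert" where
  "xe nn e i = (if i = 0 then Orig (fst e)
                else if i = nn (fst e) (snd e) then Orig (snd e) else Sub e i)"

definition mod_seg :: "('v \<times> 'v) set \<Rightarrow> ('v \<Rightarrow> 'v \<Rightarrow> nat) \<Rightarrow> 'v \<times> 'v \<Rightarrow> nat
     \<Rightarrow> 'v mvert \<Rightarrow> 'v mvert \<Rightarrow> bool" where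
  "mod_seg Ep nn e i a b \<longleftrightarrow> e \<in> Ep \<and> i < nn (fst e) (snd e) \<and>
     {a, b} = {xe nn e i, xe nn e (Suc i)}"

definition mod_w :: "('v \<times> 'v) set \<Rightarrow> ('v \<Rightarrow> 'v \<Rightarrow> nat) \<Rightarrow> ('v \<Rightarrow> 'v \<Rightarrow> real)
     \<Rightarrow> 'v mvert \<Rightarrow> 'v mvert \<Rightarrow> real" where
  "mod_w Ep nn w a b = (if \<exists>e i. mod_seg Ep nn e i a b
     then (let e = (SOME e. \<exists>i. mod_seg Ep nn e i a b)
           in real (nn (fst e) (snd e)) * w (fst e) (snd e))
     else 0)"

definition mod_sigma :: "('v \<times> 'v) set \<Rightarrow> ('v \<Rightarrow> 'v \<Rightarrow> nat) \<Rightarrow> ('v \<Rightarrow> 'v \<Rightarrow> real)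
     \<Rightarrow> 'v mvert \<Rightarrow> 'v mvert \<Rightarrow> real" where
  "mod_sigma Ep nn s a b = (if \<exists>e i. mod_seg Ep nn e i a b
     then (let e = (SOME e. \<exists>i. mod_seg Ep nn e i a b)
           in s (fst e) (snd e) / real (nn (fst e) (snd e)))
     else 0)"

definition mod_mu :: "('v \<Rightarrow> 'v \<Rightarrow> nat) \<Rightarrow> ('v \<Rightarrow> 'v \<Rightarrow> real) \<Rightarrow> ('v \<Rightarrow> 'v \<Rightarrow> real)
     \<Rightarrow> ('v \<Rightarrow> real) \<Rightarrow> 'v mvert \<Rightarrow> real" where
  "mod_mu nn w s mu v = (case v of Orig x \<Rightarrow> mu x
     | Sub e i \<Rightarrow> 2 * w (fst e) (snd e) * (s (fst e) (snd e))\<^sup>2 / real (nn (fst e) (snd e)))"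

end

theory Submission
  imports Defs
begin

inductive reach :: "('v \<Rightarrow> 'v \<Rightarrow> real) \<Rightarrow> ('v \<Rightarrow> 'v \<Rightarrow> real) \<Rightarrow> 'v \<Rightarrow> 'v \<Rightarrow> real \<Rightarrow> bool"
  for W S where
  rrefl: "reach W S a a 0"
| rstep: "W a b > 0 \<Longrightarrow> reach W S b c L \<Longrightarrow> reach W S a c (S a b + L)"

lemma reach_trans: "reach W S x y L1 \<Longrightarrow> reach W S y z L2 \<Longrightarrow> reach W S x z (L1 + L2)"
proof (induction rule: reach.induct)
  case (rrefl a) then show ?case by simp
next
  case (rstep a b c L)
  then have "reach W S a z (S a b + (L + L2))" by (intro reach.rstep) auto
  then show ?case by (simp add: add.assoc)
qed

lemma reach_edge: "W a b > 0 \<Longrightarrow> reach W S a b (S a b)"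
proof -
  assume h: "W a b > 0"
  have "reach W S a b (S a b + 0)" by (rule reach.rstep[OF h reach.rrefl[of W S b]])
  then show ?thesis by simp
qed

lemma all_split: "(\<forall>i. Suc i < Suc (Suc n) \<longrightarrow> P i) \<longleftrightarrow> P 0 \<and> (\<forall>i. Suc i < Suc n \<longrightarrow> P (Suc i))"
  apply auto
  subgoal for i by (cases i) auto
  done

lemma is_walk_cons: "is_walk W (a#b#q) \<longleftrightarrow> W a b > 0 \<and> is_walk W (b#q)"
  unfolding is_walk_def length_Cons all_split by simp

lemma walk_len_cons: "walk_len S (a#b#q) = S a b + walk_len S (b#q)"
  unfolding walk_len_def by (simp only: length_Cons diff_Suc_1 sum.lessThan_Suc_shift) simp

lemma reach_walk: "reach W S a b L \<Longrightarrow>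
  \<exists>p. p \<noteq> [] \<and> hd p = a \<and> last p = b \<and> is_walk W p \<and> walk_len S p = L"
proof (induction rule: reach.induct)
  case (rrefl a) then show ?case
    by (intro exI[of _ "[a]"]) (auto simp: is_walk_def walk_len_def)
next
  case (rstep a b c L)
  then obtain p where p: "p \<noteq> []" "hd p = b" "last p = c" "is_walk W p" "walk_len S p = L" by blast
  then obtain q where q: "p = b # q" by (cases p) auto
  show ?case using p q rstep.hyps
    by (intro exI[of _ "a#p"]) (auto simp: is_walk_cons walk_len_cons)
qed

lemma walk_reach: "p \<noteq> [] \<Longrightarrow> is_walk W p \<Longrightarrow> reach W S (hd p) (last p) (walk_len S p)"
proof (induction p rule: induct_list012)
  case 1 then show ?case by simp
next
  case (2 x) then show ?case using reach.rrefl[of W S x] by (simp add: walk_len_def)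
next
  case (3 x y zs)
  then have "reach W S y (last (y#zs)) (walk_len S (y#zs))" by (simp add: is_walk_cons)
  from reach.rstep[OF _ this, of x] 3(4) show ?case by (simp add: is_walk_cons walk_len_cons)
qed

lemma walk_len_nonneg: "is_walk W p \<Longrightarrow> (\<forall>x y. W x y > 0 \<longrightarrow> S x y \<ge> 0) \<Longrightarrow> walk_len S p \<ge> 0"
  unfolding walk_len_def is_walk_def by (intro sum_nonneg) auto

lemma path_dist_le: "reach W S a b L \<Longrightarrow> (\<forall>x y. W x y > 0 \<longrightarrow> S x y \<ge> 0) \<Longrightarrow> path_dist W S a b \<le> L"
proof -
  assume r: "reach W S a b L" and nn: "\<forall>x y. W x y > 0 \<longrightarrow> S x y \<ge> 0"
  obtain p where p: "p \<noteq> []" "hd p = a" "last p = b" "is_walk W p" "walk_len S p = L"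
    using reach_walk[OF r] by blast
  have mem: "L \<in> {walk_len S p | p. p \<noteq> [] \<and> hd p = a \<and> last p = b \<and> is_walk W p}"
    using p by blast
  have bdd: "bdd_below {walk_len S p | p. p \<noteq> [] \<and> hd p = a \<and> last p = b \<and> is_walk W p}"
    unfolding bdd_below_def
  proof (intro exI ballI)
    fix z assume "z \<in> {walk_len S p | p. p \<noteq> [] \<and> hd p = a \<and> last p = b \<and> is_walk W p}"
    then obtain q where "z = walk_len S q" "is_walk W q" by blast
    then show "0 \<le> z" using walk_len_nonneg[OF _ nn] by simp
  qed
  show ?thesis unfolding path_dist_def by (rule cInf_lower[OF mem bdd])
qed

lemma path_dist_lt: "path_dist W S a b < T \<Longrightarrow> \<exists>p. p \<noteq> [] \<and> hd p = a \<and> last p = b \<and> is_walk W p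
   \<Longrightarrow> \<exists>L<T. reach W S a b L"
proof -
  assume a1: "path_dist W S a b < T" and a2: "\<exists>p. p \<noteq> [] \<and> hd p = a \<and> last p = b \<and> is_walk W p"
  have ne: "{walk_len S p | p. p \<noteq> [] \<and> hd p = a \<and> last p = b \<and> is_walk W p} \<noteq> {}"
    using a2 by blast
  have "\<exists>z\<in>{walk_len S p | p. p \<noteq> [] \<and> hd p = a \<and> last p = b \<and> is_walk W p}. z < T"
    by (rule cInf_lessD[OF ne]) (use a1 in \<open>simp add: path_dist_def\<close>)
  then obtain p where p: "p \<noteq> []" "hd p = a" "last p = b" "is_walk W p" "walk_len S p < T" by blast
  have "reach W S (hd p) (last p) (walk_len S p)" by (rule walk_reach[OF p(1) p(4)])
  then show ?thesis using p by blast
qed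

lemma xe_Sub: "xe nn e' i = Sub e m \<Longrightarrow> e' = e"
  unfolding xe_def by (simp split: if_splits)

lemma some_eval:
  assumes some: "(SOME e. \<exists>i. mod_seg Ep nn e i a b) = e" and ex2: "\<exists>e i. mod_seg Ep nn e i a b"
  shows "mod_w Ep nn w a b = real (nn (fst e) (snd e)) * w (fst e) (snd e)
     \<and> mod_sigma Ep nn s a b = s (fst e) (snd e) / real (nn (fst e) (snd e))"
proof -
  have A: "mod_w Ep nn w a b = (let e = (SOME e. \<exists>i. mod_seg Ep nn e i a b)
           in real (nn (fst e) (snd e)) * w (fst e) (snd e))"
    unfolding mod_w_def by (rule if_P[OF ex2])
  have B: "mod_sigma Ep nn s a b = (let e = (SOME e. \<exists>i. mod_seg Ep nn e i a b)
           in s (fst e) (snd e) / real (nn (fst e) (snd e)))"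
    unfolding mod_sigma_def by (rule if_P[OF ex2])
  show ?thesis unfolding A B some Let_def by (rule conjI; rule refl)
qed

lemma seg:
  assumes orient: "orientation w Ep"
    and ge2: "\<forall>x y. w x y > 0 \<longrightarrow> nn x y \<ge> 2"
    and e: "e \<in> Ep" and j: "j < nn (fst e) (snd e)"
    and ab: "{a,b} = {xe nn e j, xe nn e (Suc j)}"
  shows "mod_w Ep nn w a b = real (nn (fst e) (snd e)) * w (fst e) (snd e)
     \<and> mod_sigma Ep nn s a b = s (fst e) (snd e) / real (nn (fst e) (snd e))"
proof -
  have wpos: "w (fst e) (snd e) > 0" using orient e unfolding orientation_def by auto
  have n2: "nn (fst e) (snd e) \<ge> 2" using ge2 wpos by auto
  obtain m where m: "Sub e m \<in> {a,b}"
  proof (cases "j = 0")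
    case True
    then have h: "xe nn e (Suc j) = Sub e 1" using n2 by (simp add: xe_def)
    have "Sub e 1 \<in> {a,b}" unfolding ab h[symmetric] by (rule insertI2, rule singletonI)
    then show ?thesis by (rule that)
  next
    case False
    then have h: "xe nn e j = Sub e j" using j by (simp add: xe_def)
    have "Sub e j \<in> {a,b}" unfolding ab h[symmetric] by (rule insertI1)
    then show ?thesis by (rule that)
  qed
  have uniq: "e' = e" if "mod_seg Ep nn e' i a b" for e' i
  proof -
    have eq: "{a,b} = {xe nn e' i, xe nn e' (Suc i)}" using that unfolding mod_seg_def by (elim conjE)
    have "Sub e m \<in> {xe nn e' i, xe nn e' (Suc i)}" using m by (simp only: eq)
    then have "xe nn e' i = Sub e m \<or> xe nn e' (Suc i) = Sub e m" by (simp only: insert_iff empty_iff) auto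
    then show ?thesis using xe_Sub by blast
  qed
  have ex: "mod_seg Ep nn e j a b" unfolding mod_seg_def using e j ab by (intro conjI)
  have ex2: "\<exists>e i. mod_seg Ep nn e i a b" using ex by (intro exI)
  have "\<exists>i. mod_seg Ep nn (SOME e. \<exists>i. mod_seg Ep nn e i a b) i a b"
    by (rule someI_ex[OF ex2])
  then obtain i where "mod_seg Ep nn (SOME e. \<exists>i. mod_seg Ep nn e i a b) i a b" by (elim exE)
  then have some: "(SOME e. \<exists>i. mod_seg Ep nn e i a b) = e" by (rule uniq)
  show ?thesis by (rule some_eval[OF some ex2])
qed

lemma mod_sigma_nonneg:
  assumes orient: "orientation w Ep" and adapted: "adapted_weight w mu s"
  shows "mod_sigma Ep nn s a b \<ge> 0"
proof (cases "\<exists>e i. mod_seg Ep nn e i a b")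
  case True
  note ex = True
  define e' where "e' = (SOME e. \<exists>i. mod_seg Ep nn e i a b)"
  have "\<exists>i. mod_seg Ep nn e' i a b" unfolding e'_def by (rule someI_ex[OF ex])
  then obtain i where "mod_seg Ep nn e' i a b" by (elim exE)
  then have "e' \<in> Ep" unfolding mod_seg_def by (elim conjE)
  then have "w (fst e') (snd e') > 0" using orient unfolding orientation_def by auto
  then have pos: "s (fst e') (snd e') > 0" using adapted unfolding adapted_weight_def by blast
  have "mod_sigma Ep nn s a b = s (fst e') (snd e') / real (nn (fst e') (snd e'))"
    unfolding mod_sigma_def Let_def e'_def by (simp only: if_P[OF ex])
  then show ?thesis using pos by simp
next
  case False
  have "mod_sigma Ep nn s a b = 0" unfolding mod_sigma_def by (simp only: if_not_P[OF False])
  then show ?thesis by simp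
qed

lemma seg_fwd:
  assumes orient: "orientation w Ep"
    and ge2: "\<forall>x y. w x y > 0 \<longrightarrow> nn x y \<ge> 2"
    and e: "e \<in> Ep"
  shows "j \<le> nn (fst e) (snd e) \<Longrightarrow>
     reach (mod_w Ep nn w) (mod_sigma Ep nn s) (xe nn e 0) (xe nn e j) (real j * (s (fst e) (snd e) / real (nn (fst e) (snd e))))
   \<and> reach (mod_w Ep nn w) (mod_sigma Ep nn s) (xe nn e j) (xe nn e 0) (real j * (s (fst e) (snd e) / real (nn (fst e) (snd e))))"
proof (induction j)
  case 0 then show ?case by (simp add: reach.rrefl)
next
  case (Suc j)
  let ?c = "s (fst e) (snd e) / real (nn (fst e) (snd e))"
  have wpos: "w (fst e) (snd e) > 0" using orient e unfolding orientation_def by auto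
  have n2: "nn (fst e) (snd e) \<ge> 2" using ge2 wpos by auto
  have j: "j < nn (fst e) (snd e)" using Suc.prems by auto
  have mw: "real (nn (fst e) (snd e)) * w (fst e) (snd e) > 0" using wpos n2 by simp
  have s1: "mod_w Ep nn w (xe nn e j) (xe nn e (Suc j)) > 0 \<and> mod_sigma Ep nn s (xe nn e j) (xe nn e (Suc j)) = ?c"
    using seg[where a="xe nn e j" and b="xe nn e (Suc j)" and s=s, OF orient ge2 e j refl] mw by simp
  have ab: "{xe nn e (Suc j), xe nn e j} = {xe nn e j, xe nn e (Suc j)}" by (rule insert_commute)
  have s2: "mod_w Ep nn w (xe nn e (Suc j)) (xe nn e j) > 0 \<and> mod_sigma Ep nn s (xe nn e (Suc j)) (xe nn e j) = ?c"
    using seg[where a="xe nn e (Suc j)" and b="xe nn e j" and s=s, OF orient ge2 e j ab] mw by simp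
  have IH: "reach (mod_w Ep nn w) (mod_sigma Ep nn s) (xe nn e 0) (xe nn e j) (real j * ?c)"
     "reach (mod_w Ep nn w) (mod_sigma Ep nn s) (xe nn e j) (xe nn e 0) (real j * ?c)"
    using Suc by auto
  have a0: "reach (mod_w Ep nn w) (mod_sigma Ep nn s) (xe nn e 0) (xe nn e (Suc j)) (real j * ?c + mod_sigma Ep nn s (xe nn e j) (xe nn e (Suc j)))"
    by (rule reach_trans[OF IH(1) reach_edge]) (use s1 in blast)
  have a: "reach (mod_w Ep nn w) (mod_sigma Ep nn s) (xe nn e 0) (xe nn e (Suc j)) (real j * ?c + ?c)"
    using a0 s1 by simp
  have b0: "reach (mod_w Ep nn w) (mod_sigma Ep nn s) (xe nn e (Suc j)) (xe nn e 0) (mod_sigma Ep nn s (xe nn e (Suc j)) (xe nn e j) + real j * ?c)"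
    by (rule reach_trans[OF reach_edge IH(2)]) (use s2 in blast)
  have b: "reach (mod_w Ep nn w) (mod_sigma Ep nn s) (xe nn e (Suc j)) (xe nn e 0) (?c + real j * ?c)"
    using b0 s2 by simp
  have eq2: "real (Suc j) * ?c = ?c + real j * ?c" by (simp only: of_nat_Suc distrib_right mult_1_left)
  have eq1: "real (Suc j) * ?c = real j * ?c + ?c" using eq2 by (simp only: add.commute)
  show ?case
  proof
    show "reach (mod_w Ep nn w) (mod_sigma Ep nn s) (xe nn e 0) (xe nn e (Suc j)) (real (Suc j) * ?c)"
      unfolding eq1 by (rule a)
    show "reach (mod_w Ep nn w) (mod_sigma Ep nn s) (xe nn e (Suc j)) (xe nn e 0) (real (Suc j) * ?c)"
      unfolding eq2 by (rule b)
  qed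
qed

lemma lift_edge:
  assumes orient: "orientation w Ep"
    and ge2: "\<forall>x y. w x y > 0 \<longrightarrow> nn x y \<ge> 2"
    and adapted: "adapted_weight w mu s"
    and wab: "w a b > 0"
  shows "reach (mod_w Ep nn w) (mod_sigma Ep nn s) (Orig a) (Orig b) (s a b)"
proof (cases "(a,b) \<in> Ep")
  case True
  have n: "nn a b \<ge> 2" using ge2 wab by auto
  have "reach (mod_w Ep nn w) (mod_sigma Ep nn s) (xe nn (a,b) 0) (xe nn (a,b) (nn a b)) (real (nn a b) * (s a b / real (nn a b)))"
    using seg_fwd[where s=s and j="nn a b", OF orient ge2 True] by simp
  then show ?thesis using n by (simp add: xe_def)
next
  case False
  then have E: "(b,a) \<in> Ep" using orient wab unfolding orientation_def by auto
  have wba: "w b a > 0" using orient E unfolding orientation_def by auto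
  have n: "nn b a \<ge> 2" using ge2 wba by auto
  have "s a b = s b a" using adapted wab unfolding adapted_weight_def by blast
  then have sy: "s b a = s a b" by simp
  have "reach (mod_w Ep nn w) (mod_sigma Ep nn s) (xe nn (b,a) (nn b a)) (xe nn (b,a) 0) (real (nn b a) * (s b a / real (nn b a)))"
    using seg_fwd[where s=s and j="nn b a", OF orient ge2 E] by simp
  then show ?thesis using n sy by (simp add: xe_def)
qed

lemma lift_reach:
  assumes orient: "orientation w Ep"
    and ge2: "\<forall>x y. w x y > 0 \<longrightarrow> nn x y \<ge> 2"
    and adapted: "adapted_weight w mu s"
  shows "reach w s a b L \<Longrightarrow> reach (mod_w Ep nn w) (mod_sigma Ep nn s) (Orig a) (Orig b) L"
proof (induction rule: reach.induct)
  case (rrefl a) then show ?case by (rule reach.rrefl)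
next
  case (rstep a b c L)
  show ?case using reach_trans[OF lift_edge[OF orient ge2 adapted rstep(1)] rstep(3)] .
qed

theorem lemma4p1:
  fixes w :: "'v \<Rightarrow> 'v \<Rightarrow> real" and mu :: "'v \<Rightarrow> real" and s :: "'v \<Rightarrow> 'v \<Rightarrow> real"
    and xbar :: 'v and nn :: "'v \<Rightarrow> 'v \<Rightarrow> nat" and Ep :: "('v \<times> 'v) set"
    and f :: "real \<Rightarrow> real" and R :: "nat \<Rightarrow> real" and sig :: "nat \<Rightarrow> real" and Co :: real
  assumes graph: "simple_weighted_graph w mu"
    and adapted: "adapted_weight w mu s"
    and Co_def: "Co = (INF x. mu x)"
    and Co_pos: "Co > 0"
    and balls_finite: "\<And>r. mu summable_on (cball_d (path_dist w s) xbar r)"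
    and f_def: "\<And>r. f r = ln (infsum mu (cball_d (path_dist w s) xbar r)) - ln Co"
    and R_def: "\<And>n. R n = 2 ^ (n + 4)"
    and sig_def: "\<And>n. sig n = 1 / (f (R n) + 2 + ln (ln (R n)))"
    and nn_sym: "\<And>x y. w x y > 0 \<Longrightarrow> nn x y = nn y x"
    and nn_ge2: "\<And>x y. w x y > 0 \<Longrightarrow> nn x y \<ge> 2"
    and nn_large: "\<And>n x y. w x y > 0 \<Longrightarrow>
        max (path_dist w s x xbar) (path_dist w s y xbar) \<ge> 2 ^ (n + 2) - 1 \<Longrightarrow>
        real (nn x y) \<ge> f (R n) + 2 + ln (ln (R n))"
    and orient: "orientation w Ep"
  shows "\<forall>n. \<forall>e\<in>Ep. \<forall>k. k \<le> nn (fst e) (snd e) - 1 \<longrightarrow>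
     max (path_dist (mod_w Ep nn w) (mod_sigma Ep nn s) (xe nn e k) (Orig xbar))
         (path_dist (mod_w Ep nn w) (mod_sigma Ep nn s) (xe nn e (Suc k)) (Orig xbar))
       \<ge> 2 ^ (n + 2)
     \<longrightarrow> mod_sigma Ep nn s (xe nn e k) (xe nn e (Suc k)) \<le> sig n"
proof (intro allI ballI impI)
  fix n e k
  assume e: "e \<in> Ep" and k: "k \<le> nn (fst e) (snd e) - 1"
    and big: "max (path_dist (mod_w Ep nn w) (mod_sigma Ep nn s) (xe nn e k) (Orig xbar))
         (path_dist (mod_w Ep nn w) (mod_sigma Ep nn s) (xe nn e (Suc k)) (Orig xbar)) \<ge> 2 ^ (n + 2)"
  define x where "x = fst e"
  define y where "y = snd e"
  have ge2: "\<forall>x y. w x y > 0 \<longrightarrow> nn x y \<ge> 2" using nn_ge2 by blast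
  have wpos: "w x y > 0" using orient e unfolding orientation_def x_def y_def by auto
  have n2: "nn x y \<ge> 2" using nn_ge2[OF wpos] .
  have kl: "k < nn x y" using k n2 unfolding x_def y_def by linarith
  have s01: "s x y > 0" "s x y \<le> 1" using adapted wpos unfolding adapted_weight_def by blast+
  have sg: "mod_sigma Ep nn s (xe nn e k) (xe nn e (Suc k)) = s x y / real (nn x y)"
    using seg[where j=k and a="xe nn e k" and b="xe nn e (Suc k)" and s=s, OF orient ge2 e] kl
    unfolding x_def y_def by blast
  define D where "D = f (R n) + 2 + ln (ln (R n))"
  have sw_nonneg: "\<forall>a b. w a b > 0 \<longrightarrow> s a b \<ge> 0"
  proof (intro allI impI)
    fix a b assume "w a b > 0"
    then have "s a b > 0" using adapted unfolding adapted_weight_def by blast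
    then show "s a b \<ge> 0" by simp
  qed
  have mu_pos: "\<And>x. mu x > 0" using graph unfolding simple_weighted_graph_def by blast
  have d0: "path_dist w s xbar xbar \<le> 0"
    by (rule path_dist_le[OF reach.rrefl sw_nonneg])
  have R16: "R n \<ge> 16"
  proof -
    have "(2::real) ^ 4 \<le> 2 ^ (n + 4)" by (rule power_increasing) auto
    then show ?thesis using R_def[of n] by simp
  qed
  have xin: "xbar \<in> cball_d (path_dist w s) xbar (R n)" unfolding cball_d_def using d0 R16 by simp
  have "infsum mu {xbar} \<le> infsum mu (cball_d (path_dist w s) xbar (R n))"
  proof (rule infsum_mono2)
    show "mu summable_on {xbar}" by simp
    show "mu summable_on cball_d (path_dist w s) xbar (R n)" by (rule balls_finite)
    show "{xbar} \<subseteq> cball_d (path_dist w s) xbar (R n)" using xin by simp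
    show "\<And>x. x \<in> cball_d (path_dist w s) xbar (R n) - {xbar} \<Longrightarrow> 0 \<le> mu x"
      using mu_pos less_imp_le by blast
  qed
  then have ge_mu: "mu xbar \<le> infsum mu (cball_d (path_dist w s) xbar (R n))" by simp
  have bdd: "bdd_below (range mu)" unfolding bdd_below_def using mu_pos less_imp_le by blast
  have "Co \<le> mu xbar" unfolding Co_def by (rule cINF_lower[OF bdd]) simp
  then have "ln Co \<le> ln (infsum mu (cball_d (path_dist w s) xbar (R n)))"
    using ge_mu Co_pos by simp
  then have f0: "f (R n) \<ge> 0" using f_def[of "R n"] by simp
  have "exp 1 < R n" using e_less_272 R16 by linarith
  then have "1 < ln (R n)" using ln_less_cancel_iff[of "exp 1" "R n"] R16 by simp
  then have ll: "ln (ln (R n)) > 0" by simp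
  have Dpos: "D > 0" unfolding D_def using f0 ll by linarith
  have conn: "\<exists>p. p \<noteq> [] \<and> hd p = x \<and> last p = xbar \<and> is_walk w p"
    using graph unfolding simple_weighted_graph_def by blast
  have mnn: "\<forall>a b. mod_w Ep nn w a b > 0 \<longrightarrow> mod_sigma Ep nn s a b \<ge> 0"
    using mod_sigma_nonneg[OF orient adapted] by blast
  have x0: "xe nn e 0 = Orig x" by (simp add: xe_def x_def)
  have dx: "path_dist w s x xbar \<ge> 2 ^ (n + 2) - 1"
  proof (rule ccontr)
    assume "\<not> ?thesis"
    then have "path_dist w s x xbar < 2 ^ (n + 2) - 1" by simp
    from path_dist_lt[OF this conn] obtain L where L: "L < 2 ^ (n+2) - 1" "reach w s x xbar L" by blast
    have LM: "reach (mod_w Ep nn w) (mod_sigma Ep nn s) (Orig x) (Orig xbar) L"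
      using lift_reach[OF orient ge2 adapted L(2)] .
    have bound: "path_dist (mod_w Ep nn w) (mod_sigma Ep nn s) (xe nn e j) (Orig xbar) < 2 ^ (n+2)"
      if j: "j \<le> nn x y" for j
    proof -
      have "reach (mod_w Ep nn w) (mod_sigma Ep nn s) (xe nn e j) (xe nn e 0) (real j * (s x y / real (nn x y)))"
        using seg_fwd[where j=j and s=s, OF orient ge2 e] j unfolding x_def y_def by blast
      then have r: "reach (mod_w Ep nn w) (mod_sigma Ep nn s) (xe nn e j) (Orig x) (real j * (s x y / real (nn x y)))"
        unfolding x0 .
      have "real j * (s x y / real (nn x y)) \<le> real (nn x y) * (s x y / real (nn x y))"
        apply (rule mult_right_mono) using j s01 by auto
      also have "\<dots> = s x y" using n2 by simp
      finally have jb: "real j * (s x y / real (nn x y)) \<le> 1" using s01 by linarith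
      have "path_dist (mod_w Ep nn w) (mod_sigma Ep nn s) (xe nn e j) (Orig xbar) \<le> real j * (s x y / real (nn x y)) + L"
        by (rule path_dist_le[OF reach_trans[OF r LM] mnn])
      then show ?thesis using jb L(1) by linarith
    qed
    have b1: "path_dist (mod_w Ep nn w) (mod_sigma Ep nn s) (xe nn e k) (Orig xbar) < 2 ^ (n+2)"
      using bound kl by simp
    have b2: "path_dist (mod_w Ep nn w) (mod_sigma Ep nn s) (xe nn e (Suc k)) (Orig xbar) < 2 ^ (n+2)"
      using bound kl by simp
    show False using big b1 b2 by linarith
  qed
  have "max (path_dist w s x xbar) (path_dist w s y xbar) \<ge> 2 ^ (n + 2) - 1" using dx by linarith
  from nn_large[OF wpos this] have nD: "real (nn x y) \<ge> D" unfolding D_def .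
  have "s x y / real (nn x y) \<le> 1 / real (nn x y)" using s01 n2 by (simp add: divide_right_mono)
  also have "\<dots> \<le> 1 / D" using nD Dpos by (simp add: frac_le)
  finally show "mod_sigma Ep nn s (xe nn e k) (xe nn e (Suc k)) \<le> sig n"
    using sg sig_def[of n] unfolding D_def by simp
qed

end
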